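(* Let $\mathcal{H}$ be finite-dimensional, let $\{O_i\}$ be a finite set of self-adjoint operators on $\mathcal{H}$, let $\mathcal{L}$ be a Lindblad generator on $\mathfrak{B}(\mathcal{H})$, and let $\mathscr{N}^\perp=\mathrm{span}\{(\mathcal{L}^\dagger)^k(O_i):k\ge0,\ \forall i\}$. Then $\mathrm{alg}(\mathscr{N}^\perp)\subsetneq\mathfrak{B}(\mathcal{H})$ if and only if there exists a non-trivial $\{O_i\}$-observable-dependent symmetry for $\mathcal{L}$. Furthermore, $\mathrm{alg}(\mathscr{N}^\perp)=\mathbb{C}\bar{\mathscr{G}}'$, where $\bar{\mathscr{G}}$ is the largest group of $\{O_i\}$-observable-dependent symmetries for $\mathcal{L}$.
   Context: A Lindblad generator has the form $\mathcal{L}(\rho)=-i[H,\rho]+\sum_u\big(L_u\rho L_u^\dagger-\tfrac12\{L_u^\dagger L_u,\rho\}\big)$; $\mathcal{L}^\dagger$ is its Hilbert–Schmidt adjoint. A unitary $S$ on $\mathcal{H}$ is an $\{O_i\}$-observable-dependent symmetry (ODS) of $\mathcal{L}$ if $S(\mathcal{L}^\dagger)^n(O_i)S^\dagger=(\mathcal{L}^\dagger)^n(O_i)$ for all integers $n\ge0$ and all $i$; the set of all such unitaries forms a group. Non-trivial means not a scalar multiple of the identity. $\mathrm{alg}(\cdot)$ denotes the smallest $*$-algebra containing a set; $\mathbb{C}\mathscr{G}'=\{X:[S,X]=0\ \forall S\in\mathscr{G}\}$. *)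

theory Defs
  imports "HOL-Analysis.Analysis"
begin

text \<open>Operators on a finite-dimensional Hilbert space H = complex^'n are
  represented as complex 'n x 'n matrices; the product is matrix product (**).\<close>

type_synonym 'n op = "complex^'n^'n"

definition adj :: "'n::finite op \<Rightarrow> 'n op" where
  "adj A = (\<chi> i j. cnj (A $ j $ i))"

definition csc :: "complex \<Rightarrow> 'n::finite op \<Rightarrow> 'n op" where
  "csc c A = (\<chi> i j. c * A $ i $ j)"

definition mtrace :: "'n::finite op \<Rightarrow> complex" where
  "mtrace A = (\<Sum>i\<in>UNIV. A $ i $ i)"

definition hs_inner :: "'n::finite op \<Rightarrow> 'n op \<Rightarrow> complex" where
  "hs_inner X Y = mtrace (adj X ** Y)"

definition hs_adjoint :: "('n::finite op \<Rightarrow> 'n op) \<Rightarrow> ('n op \<Rightarrow> 'n op)" where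
  "hs_adjoint T = (THE T'. \<forall>X Y. hs_inner X (T Y) = hs_inner (T' X) Y)"

definition commutator :: "'n::finite op \<Rightarrow> 'n op \<Rightarrow> 'n op" where
  "commutator A B = A ** B - B ** A"

definition anticommutator :: "'n::finite op \<Rightarrow> 'n op \<Rightarrow> 'n op" where
  "anticommutator A B = A ** B + B ** A"

definition lindblad :: "'n::finite op \<Rightarrow> 'n op list \<Rightarrow> 'n op \<Rightarrow> 'n op" where
  "lindblad H Ls \<rho> = csc (-\<i>) (commutator H \<rho>)
     + sum_list (map (\<lambda>L. L ** \<rho> ** adj L - csc (1/2) (anticommutator (adj L ** L) \<rho>)) Ls)"

definition unitary_op :: "'n::finite op \<Rightarrow> bool" where
  "unitary_op S \<longleftrightarrow> adj S ** S = mat 1 \<and> S ** adj S = mat 1"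

definition ods :: "('n::finite op \<Rightarrow> 'n op) \<Rightarrow> 'n op set \<Rightarrow> 'n op \<Rightarrow> bool" where
  "ods Ldag Os S \<longleftrightarrow> unitary_op S \<and>
     (\<forall>k::nat. \<forall>B\<in>Os. S ** (Ldag ^^ k) B ** adj S = (Ldag ^^ k) B)"

definition trivial_op :: "'n::finite op \<Rightarrow> bool" where
  "trivial_op S \<longleftrightarrow> (\<exists>c. S = mat c)"

definition cspan :: "'n::finite op set \<Rightarrow> 'n op set" where
  "cspan S = {X. \<exists>F c. finite F \<and> F \<subseteq> S \<and> X = (\<Sum>v\<in>F. csc (c v) v)}"

definition star_alg :: "'n::finite op set \<Rightarrow> bool" where
  "star_alg A \<longleftrightarrow> mat 1 \<in> A
     \<and> (\<forall>X\<in>A. \<forall>Y\<in>A. X + Y \<in> A \<and> X ** Y \<in> A)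
     \<and> (\<forall>X\<in>A. \<forall>c. csc c X \<in> A)
     \<and> (\<forall>X\<in>A. adj X \<in> A)"

definition alg :: "'n::finite op set \<Rightarrow> 'n op set" where
  "alg S = \<Inter>{A. star_alg A \<and> S \<subseteq> A}"

definition commutant :: "'n::finite op set \<Rightarrow> 'n op set" where
  "commutant G = {X. \<forall>S\<in>G. S ** X = X ** S}"

end

theory Submission
  imports Defs
begin


lemma mmult_entry: "((X::'n::finite op) ** Y) $ i $ j = (\<Sum>k\<in>UNIV. X$i$k * Y$k$j)"
  by (simp add: matrix_matrix_mult_def)

lemma csc_entry[simp]: "csc c X $ i $ j = c * X $ i $ j"
  by (simp add: csc_def)

lemma adj_entry[simp]: "adj X $ i $ j = cnj (X $ j $ i)"
  by (simp add: adj_def)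

lemma mat_entry: "(mat c :: 'n::finite op) $ i $ j = (if i = j then c else 0)"
  by (simp add: mat_def)

lemma adj_adj[simp]: "adj (adj X) = X"
  by (simp add: vec_eq_iff)

lemma adj_add[simp]: "adj (X + Y) = adj X + adj Y"
  by (simp add: vec_eq_iff)

lemma adj_diff[simp]: "adj (X - Y) = adj X - adj Y"
  by (simp add: vec_eq_iff)

lemma adj_csc[simp]: "adj (csc c X) = csc (cnj c) (adj X)"
  by (simp add: vec_eq_iff)

lemma adj_mat[simp]: "adj (mat c :: 'n::finite op) = mat (cnj c)"
  by (simp add: vec_eq_iff mat_entry)

lemma adj_mult: "adj ((X::'n::finite op) ** Y) = adj Y ** adj X"
  by (simp add: vec_eq_iff mmult_entry mult.commute)

lemma csc_add: "csc c (X + Y) = csc c X + csc c Y"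
  by (simp add: vec_eq_iff distrib_left)

lemma csc_diff: "csc c (X - Y) = csc c X - csc c Y"
  by (simp add: vec_eq_iff right_diff_distrib)

lemma csc_csc[simp]: "csc c (csc d X) = csc (c * d) X"
  by (simp add: vec_eq_iff)

lemma csc_1[simp]: "csc 1 X = X"
  by (simp add: vec_eq_iff)

lemma csc_0[simp]: "csc 0 X = 0"
  by (simp add: vec_eq_iff)

lemma csc_zero[simp]: "csc c 0 = 0"
  by (simp add: vec_eq_iff)

lemma csc_addc: "csc (c + d) X = csc c X + csc d X"
  by (simp add: vec_eq_iff distrib_right)

lemma csc_mult_left: "csc c (X::'n::finite op) ** Y = csc c (X ** Y)"
  by (simp add: vec_eq_iff mmult_entry sum_distrib_left mult.assoc)

lemma csc_mult_right: "(X::'n::finite op) ** csc c Y = csc c (X ** Y)"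
  by (simp add: vec_eq_iff mmult_entry sum_distrib_left algebra_simps)

lemma mat_mult_left: "mat c ** (X::'n::finite op) = csc c X"
  by (simp add: vec_eq_iff mmult_entry mat_entry if_distrib if_distribR cong: if_cong)

lemma mat_mult_right: "(X::'n::finite op) ** mat c = csc c X"
  by (simp add: vec_eq_iff mmult_entry mat_entry if_distrib if_distribR mult.commute cong: if_cong)

lemma mat_add: "(mat c :: 'n::finite op) + mat d = mat (c + d)"
  by (simp add: vec_eq_iff mat_entry)

lemma mat_diff: "(mat c :: 'n::finite op) - mat d = mat (c - d)"
  by (simp add: vec_eq_iff mat_entry)

lemma csc_mat: "csc c (mat d :: 'n::finite op) = mat (c * d)"
  by (simp add: vec_eq_iff mat_entry)

lemma mult_add_right: "((X::'n::finite op) + Y) ** Z = X ** Z + Y ** Z"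
  by (simp add: vec_eq_iff mmult_entry sum.distrib distrib_right)

lemma mult_add_left: "(Z::'n::finite op) ** (X + Y) = Z ** X + Z ** Y"
  by (simp add: vec_eq_iff mmult_entry sum.distrib distrib_left)

lemma mult_diff_right: "((X::'n::finite op) - Y) ** Z = X ** Z - Y ** Z"
  by (simp add: vec_eq_iff mmult_entry sum_subtractf left_diff_distrib)

lemma mult_diff_left: "(Z::'n::finite op) ** (X - Y) = Z ** X - Z ** Y"
  by (simp add: vec_eq_iff mmult_entry sum_subtractf right_diff_distrib)

lemma csc_scaleR: "r *\<^sub>R (X::'n::finite op) = csc (of_real r) X"
  unfolding vec_eq_iff by (simp add: scaleR_conv_of_real[where 'a=complex])


lemma complex_inner_cnj: "(w::complex) \<bullet> z = Re (cnj w * z)"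
  by (simp add: inner_complex_def)

lemma op_inner: "(X::'n::finite op) \<bullet> Y = Re (\<Sum>i\<in>UNIV. \<Sum>k\<in>UNIV. cnj (X$i$k) * Y$i$k)"
  by (simp add: inner_vec_def complex_inner_cnj Re_sum)

lemma inner_csc: "(W::'n::finite op) \<bullet> csc c Z = csc (cnj c) W \<bullet> Z"
  by (simp add: op_inner mult.assoc mult.left_commute)

lemma inner_mult: "(W::'n::finite op) \<bullet> (a ** Z) = (adj a ** W) \<bullet> Z"
proof -
  have "(\<Sum>i\<in>UNIV. \<Sum>k\<in>UNIV. cnj (W$i$k) * (a ** Z)$i$k)
      = (\<Sum>i\<in>UNIV. \<Sum>k\<in>UNIV. \<Sum>m\<in>UNIV. cnj (W$i$k) * a$i$m * Z$m$k)"
    by (simp add: mmult_entry sum_distrib_left mult.assoc)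
  also have "\<dots> = (\<Sum>i\<in>UNIV. \<Sum>m\<in>UNIV. \<Sum>k\<in>UNIV. cnj (W$i$k) * a$i$m * Z$m$k)"
    by (rule sum.cong[OF refl], rule sum.swap)
  also have "\<dots> = (\<Sum>m\<in>UNIV. \<Sum>i\<in>UNIV. \<Sum>k\<in>UNIV. cnj (W$i$k) * a$i$m * Z$m$k)"
    by (rule sum.swap)
  also have "\<dots> = (\<Sum>m\<in>UNIV. \<Sum>k\<in>UNIV. \<Sum>i\<in>UNIV. cnj (W$i$k) * a$i$m * Z$m$k)"
    by (rule sum.cong[OF refl], rule sum.swap)
  also have "\<dots> = (\<Sum>m\<in>UNIV. \<Sum>k\<in>UNIV. cnj ((adj a ** W)$m$k) * Z$m$k)"
    by (simp add: mmult_entry sum_distrib_left sum_distrib_right mult_ac)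
  finally show ?thesis by (simp add: op_inner)
qed

lemma star_alg_UNIV: "star_alg UNIV"
  by (simp add: star_alg_def)

lemma star_alg_alg: "star_alg (alg S)"
  unfolding alg_def star_alg_def by auto

lemma alg_least: "star_alg B \<Longrightarrow> S \<subseteq> B \<Longrightarrow> alg S \<subseteq> B"
  unfolding alg_def by auto

lemma alg_sup: "S \<subseteq> alg S"
  unfolding alg_def by auto

lemma star_alg_zero: "star_alg A \<Longrightarrow> 0 \<in> A"
  unfolding star_alg_def by (metis csc_0)

lemma star_alg_diff: "star_alg A \<Longrightarrow> X \<in> A \<Longrightarrow> Y \<in> A \<Longrightarrow> X - Y \<in> A"
proof -
  assume a: "star_alg A" "X \<in> A" "Y \<in> A"
  have "csc (-1) Y \<in> A" using a unfolding star_alg_def by blast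
  moreover have "X - Y = X + csc (-1) Y" by (simp add: vec_eq_iff)
  ultimately show ?thesis using a unfolding star_alg_def by metis
qed

lemma star_alg_sum: assumes "star_alg A" "finite F" "\<And>v. v \<in> F \<Longrightarrow> f v \<in> A" shows "sum f F \<in> A"
  using assms(2,3)
proof (induction F rule: finite_induct)
  case empty then show ?case using assms(1) by (simp add: star_alg_zero)
next
  case (insert x F) then show ?case using assms(1) unfolding star_alg_def by (simp)
qed

lemma cspan_sub: "star_alg A \<Longrightarrow> S \<subseteq> A \<Longrightarrow> cspan S \<subseteq> A"
  unfolding cspan_def
proof clarify
  fix F c assume a: "star_alg A" "S \<subseteq> A" "finite F" "F \<subseteq> S"
  show "(\<Sum>v\<in>F. csc (c v) v) \<in> A"
    by (rule star_alg_sum) (use a in \<open>auto simp: star_alg_def\<close>)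
qed

lemma cspan_sup: "S \<subseteq> cspan S"
  unfolding cspan_def
proof
  fix x assume "x \<in> S"
  then show "x \<in> {X. \<exists>F c. finite F \<and> F \<subseteq> S \<and> X = (\<Sum>v\<in>F. csc (c v) v)}"
    by (intro CollectI exI[of _ "{x}"] exI[of _ "\<lambda>_. 1"]) simp
qed

lemma subspace_star_alg: "star_alg A \<Longrightarrow> subspace A"
  unfolding subspace_def using star_alg_zero by (auto simp: csc_scaleR star_alg_def)


lemma herm_entry: "adj h = h \<Longrightarrow> cnj (h $ j $ k) = h $ k $ j"
  by (metis adj_entry)

lemma herm_ker:
  fixes h :: "'n::finite op"
  assumes h: "adj h = h" and v: "(h + mat \<i>) *v v = 0"
  shows "v = 0"
proof -
  define q where "q = (\<Sum>j\<in>UNIV. \<Sum>k\<in>UNIV. cnj (v$j) * h$j$k * v$k)"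
  define s where "s = (\<Sum>j\<in>UNIV. (cmod (v$j))^2)"
  have row: "(\<Sum>k\<in>UNIV. h$j$k * v$k) = - \<i> * v$j" for j
  proof -
    have "((h + mat \<i>) *v v) $ j = 0" using v by simp
    then have "(\<Sum>k\<in>UNIV. h$j$k * v$k) + (\<Sum>k\<in>UNIV. (if j = k then \<i> else 0) * v$k) = 0"
      by (simp add: matrix_vector_mult_def mat_entry distrib_right sum.distrib)
    then have "(\<Sum>k\<in>UNIV. h$j$k * v$k) + \<i> * v$j = 0"
      by (simp add: if_distrib if_distribR cong: if_cong)
    then show ?thesis by (simp add: eq_neg_iff_add_eq_0)
  qed
  have q1: "q = - \<i> * of_real s"
  proof -
    have "q = (\<Sum>j\<in>UNIV. cnj (v$j) * (\<Sum>k\<in>UNIV. h$j$k * v$k))"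
      by (simp add: q_def sum_distrib_left mult.assoc)
    also have "\<dots> = (\<Sum>j\<in>UNIV. - \<i> * (cnj (v$j) * v$j))"
      by (rule sum.cong[OF refl]) (simp only: row, simp add: mult_ac)
    also have "\<dots> = - \<i> * of_real s"
      by (simp only: s_def of_real_sum complex_norm_square sum_distrib_left) (simp add: mult_ac)
    finally show ?thesis .
  qed
  have q2: "cnj q = q"
  proof -
    have "cnj q = (\<Sum>j\<in>UNIV. \<Sum>k\<in>UNIV. v$j * h$k$j * cnj (v$k))"
      by (simp add: q_def herm_entry[OF h])
    also have "\<dots> = (\<Sum>k\<in>UNIV. \<Sum>j\<in>UNIV. v$j * h$k$j * cnj (v$k))"
      by (rule sum.swap)
    also have "\<dots> = q" by (simp add: q_def mult_ac)
    finally show ?thesis .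
  qed
  have "\<i> * of_real s = - \<i> * of_real s" using q1 q2 by simp
  then have "s = 0" by simp
  then have "\<forall>j\<in>UNIV. (cmod (v$j))^2 = 0"
    unfolding s_def by (subst (asm) sum_nonneg_eq_0_iff) auto
  then show ?thesis by (simp add: vec_eq_iff)
qed

lemma herm_inv:
  fixes h :: "'n::finite op"
  assumes h: "adj h = h"
  obtains g where "g ** (h + mat \<i>) = mat 1" "(h + mat \<i>) ** g = mat 1"
proof -
  have "\<exists>B. B ** (h + mat \<i>) = mat 1"
    using herm_ker[OF h] by (subst matrix_left_invertible_ker) blast
  then obtain g where "g ** (h + mat \<i>) = mat 1" by blast
  then show ?thesis using that matrix_left_right_inverse by blast
qed


definition cm :: "'n::finite op \<Rightarrow> 'n op \<Rightarrow> bool" where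
  "cm X Y \<longleftrightarrow> X ** Y = Y ** X"

lemma cm_sym: "cm X Y \<Longrightarrow> cm Y X" by (simp add: cm_def)
lemma cm_refl: "cm X X" by (simp add: cm_def)
lemma cm_mat: "cm X (mat c)" by (simp add: cm_def mat_mult_left mat_mult_right)
lemma cm_add: "cm X Y \<Longrightarrow> cm X Z \<Longrightarrow> cm X (Y + Z)"
  by (simp add: cm_def mult_add_left mult_add_right)
lemma cm_diff: "cm X Y \<Longrightarrow> cm X Z \<Longrightarrow> cm X (Y - Z)"
  by (simp add: cm_def mult_diff_left mult_diff_right)
lemma cm_csc: "cm X Y \<Longrightarrow> cm X (csc c Y)"
  by (simp add: cm_def csc_mult_left csc_mult_right)
lemma cm_mult: "cm X Y \<Longrightarrow> cm X Z \<Longrightarrow> cm X (Y ** Z)"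
  by (simp add: cm_def matrix_mul_assoc) (metis matrix_mul_assoc)
lemma cm_inv: "cm X Y \<Longrightarrow> g ** X = mat 1 \<Longrightarrow> X ** g = mat 1 \<Longrightarrow> cm g Y"
  unfolding cm_def by (metis matrix_mul_assoc matrix_mul_lid matrix_mul_rid)
lemma cm_adj: "cm X Y \<Longrightarrow> cm (adj X) (adj Y)"
  by (simp add: cm_def adj_mult[symmetric])

lemma commutant_cm: "X \<in> commutant A \<longleftrightarrow> (\<forall>a\<in>A. cm X a)"
  by (auto simp: commutant_def cm_def)


lemma cayley_step:
  fixes h x :: "'n::finite op"
  assumes h: "adj h = h" and hA: "h \<in> commutant A"
    and xu: "\<And>u. unitary_op u \<Longrightarrow> u \<in> commutant A \<Longrightarrow> cm x u"
  shows "cm x h"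
proof -
  let ?k = "h + mat \<i>" and ?l = "h - mat \<i>"
  obtain g where g1: "g ** ?k = mat 1" and g2: "?k ** g = mat 1" using herm_inv[OF h] by blast
  have kA: "?k \<in> commutant A" using hA unfolding commutant_cm by (metis cm_add cm_sym cm_mat)
  have lA: "?l \<in> commutant A" using hA unfolding commutant_cm by (metis cm_diff cm_sym cm_mat)
  have gA: "g \<in> commutant A"
    using kA unfolding commutant_cm by (meson cm_inv g1 g2)
  define u where "u = ?l ** g"
  have uA: "u \<in> commutant A" using lA gA unfolding commutant_cm u_def
    by (meson cm_mult cm_sym)
  have kl: "cm ?k ?l" by (metis cm_diff cm_add cm_refl cm_mat cm_sym)
  have gl: "cm g ?l" by (rule cm_inv[OF kl g1 g2])
  have adjk: "adj ?k = ?l" by (simp add: h, simp add: vec_eq_iff mat_entry)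
  have adjl: "adj ?l = ?k" by (simp add: h, simp add: vec_eq_iff mat_entry)
  have ag1: "adj g ** ?l = mat 1" using arg_cong[OF g2, of adj] unfolding adj_mult adjk by simp
  have ag2: "?l ** adj g = mat 1" using arg_cong[OF g1, of adj] unfolding adj_mult adjk by simp
  have adju: "adj u = adj g ** ?k" unfolding u_def adj_mult adjl by simp
  have u1: "adj u ** u = mat 1"
  proof -
    have "adj u ** u = adj g ** ((?k ** ?l) ** g)" unfolding adju by (simp add: u_def matrix_mul_assoc)
    also have "\<dots> = adj g ** (?l ** (?k ** g))" using kl by (simp add: cm_def matrix_mul_assoc)
    also have "\<dots> = mat 1" using g2 ag1 by (simp add: matrix_mul_assoc)
    finally show ?thesis .
  qed
  have u2: "u ** adj u = mat 1"
  proof -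
    have ug: "u = g ** ?l" using gl by (simp add: u_def cm_def)
    have "u ** adj u = g ** ((?l ** adj g) ** ?k)" unfolding adju by (subst (1) ug, simp add: matrix_mul_assoc)
    also have "\<dots> = mat 1" using ag2 g1 by simp
    finally show ?thesis .
  qed
  have xu': "cm x u" using xu[OF _ uA] u1 u2 by (simp add: unitary_op_def)
  have "mat 1 - u = (?k - ?l) ** g" by (simp only: u_def mult_diff_right g2)
  also have "?k - ?l = mat (2 * \<i>)" by (simp add: vec_eq_iff mat_entry)
  finally have "mat 1 - u = csc (2 * \<i>) g" by (simp add: mat_mult_left)
  then have "g = csc (1 / (2 * \<i>)) (mat 1 - u)" by simp
  then have "cm x g" by (simp add: cm_csc cm_diff cm_mat xu')
  then have "cm ?k x" by (intro cm_inv[OF cm_sym g2 g1])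
  then have "cm x (?k - mat \<i>)" by (intro cm_diff cm_sym[of ?k] cm_mat) 
  then show ?thesis by simp
qed



lemma dcomm_of_unitaries:
  fixes x :: "'n::finite op"
  assumes adjA: "\<forall>a\<in>A. adj a \<in> A"
    and xu: "\<And>u. unitary_op u \<Longrightarrow> u \<in> commutant A \<Longrightarrow> cm x u"
  shows "x \<in> commutant (commutant A)"
  unfolding commutant_def[of "commutant A"]
proof (intro CollectI ballI)
  fix M assume M: "M \<in> commutant A"
  have Ma: "adj M \<in> commutant A"
    unfolding commutant_cm
  proof
    fix a assume "a \<in> A"
    then have "cm M (adj a)" using M adjA unfolding commutant_cm by blast
    then show "cm (adj M) a" using cm_adj by fastforce
  qed
  define h1 where "h1 = M + adj M"
  define h2 where "h2 = csc \<i> (M - adj M)"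
  have h1A: "h1 \<in> commutant A" using M Ma unfolding h1_def commutant_cm
    by (metis cm_add cm_sym)
  have h2A: "h2 \<in> commutant A" using M Ma unfolding h2_def commutant_cm
    by (metis cm_diff cm_csc cm_sym)
  have h1h: "adj h1 = h1" by (simp add: h1_def add.commute)
  have h2h: "adj h2 = h2" by (simp add: h2_def vec_eq_iff algebra_simps)
  have c1: "cm x h1" by (rule cayley_step[OF h1h h1A xu])
  have c2: "cm x h2" by (rule cayley_step[OF h2h h2A xu])
  have "M = csc (1/2) h1 + csc (-\<i>/2) h2"
    by (simp add: h1_def h2_def vec_eq_iff field_simps)
  then have "cm x M" using c1 c2 by (metis cm_add cm_csc)
  then show "M ** x = x ** M" by (simp add: cm_def)
qed



definition proj :: "'n::finite op set \<Rightarrow> 'n op \<Rightarrow> 'n op" where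
  "proj A Y = (SOME p. p \<in> A \<and> (\<forall>w\<in>A. w \<bullet> (Y - p) = 0))"

definition unit_op :: "'n::finite \<Rightarrow> 'n \<Rightarrow> 'n op" where
  "unit_op j l = (\<chi> a b. if a = j \<and> b = l then 1 else 0)"

context
  fixes A :: "'n::finite op set"
  assumes sA: "star_alg A"
begin

lemma proj_ex: "\<exists>p. p \<in> A \<and> (\<forall>w\<in>A. w \<bullet> (Y - p) = 0)"
proof -
  have spA: "span A = A" using subspace_star_alg[OF sA] by (simp add: span_eq_iff)
  obtain y z where y: "y \<in> span A" and z: "\<And>w. w \<in> span A \<Longrightarrow> orthogonal z w" and Y: "Y = y + z"
    using orthogonal_subspace_decomp_exists[of A Y] by blast
  have "\<forall>w\<in>A. w \<bullet> (Y - y) = 0"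
    using z spA by (simp add: Y orthogonal_def inner_commute)
  then show ?thesis using y spA by blast
qed

lemma proj_prop: "proj A Y \<in> A \<and> (\<forall>w\<in>A. w \<bullet> (Y - proj A Y) = 0)"
  unfolding proj_def by (rule someI_ex[OF proj_ex])

lemma proj_unique:
  assumes p: "p \<in> A" "\<forall>w\<in>A. w \<bullet> (Y - p) = 0"
  shows "proj A Y = p"
proof -
  let ?q = "proj A Y"
  have d: "?q - p \<in> A" using star_alg_diff[OF sA] proj_prop p by blast
  have "(?q - p) \<bullet> (Y - p) - (?q - p) \<bullet> (Y - ?q) = 0"
    using d p proj_prop by simp
  then have "(?q - p) \<bullet> (?q - p) = 0" by (simp add: inner_diff_right)
  then show ?thesis by simp
qed

lemma proj_add: "proj A (Y + Z) = proj A Y + proj A Z"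
proof (rule proj_unique)
  show "proj A Y + proj A Z \<in> A" using proj_prop sA unfolding star_alg_def by blast
  show "\<forall>w\<in>A. w \<bullet> (Y + Z - (proj A Y + proj A Z)) = 0"
  proof
    fix w assume w: "w \<in> A"
    have "Y + Z - (proj A Y + proj A Z) = (Y - proj A Y) + (Z - proj A Z)" by simp
    then show "w \<bullet> (Y + Z - (proj A Y + proj A Z)) = 0"
      using w proj_prop by (simp only: inner_add_right)
  qed
qed

lemma proj_csc: "proj A (csc c Y) = csc c (proj A Y)"
proof (rule proj_unique)
  show "csc c (proj A Y) \<in> A" using proj_prop sA by (auto simp: star_alg_def)
  show "\<forall>w\<in>A. w \<bullet> (csc c Y - csc c (proj A Y)) = 0"
  proof
    fix w assume "w \<in> A"
    then have "csc (cnj c) w \<in> A" using sA by (auto simp: star_alg_def)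
    then show "w \<bullet> (csc c Y - csc c (proj A Y)) = 0"
      using proj_prop by (simp add: csc_diff[symmetric] inner_csc)
  qed
qed

lemma proj_mult: "a \<in> A \<Longrightarrow> proj A (a ** Y) = a ** proj A Y"
proof (rule proj_unique)
  assume a: "a \<in> A"
  show "a ** proj A Y \<in> A" using a proj_prop sA by (auto simp: star_alg_def)
  show "\<forall>w\<in>A. w \<bullet> (a ** Y - a ** proj A Y) = 0"
  proof
    fix w assume "w \<in> A"
    then have "adj a ** w \<in> A" using a sA by (auto simp: star_alg_def)
    then show "w \<bullet> (a ** Y - a ** proj A Y) = 0"
      using proj_prop by (simp add: mult_diff_left[symmetric] inner_mult)
  qed
qed

lemma proj_id: "Y \<in> A \<Longrightarrow> proj A Y = Y"
  by (rule proj_unique) auto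

lemma proj_zero: "proj A 0 = 0"
  using proj_id star_alg_zero[OF sA] by blast

lemma proj_sum: "finite F \<Longrightarrow> proj A (sum f F) = (\<Sum>v\<in>F. proj A (f v))"
  by (induction F rule: finite_induct) (simp_all add: proj_zero proj_add)

end

lemma op_expand: "(Y::'n::finite op) = (\<Sum>j\<in>UNIV. \<Sum>l\<in>UNIV. csc (Y$j$l) (unit_op j l))"
proof -
  have "(\<Sum>j\<in>UNIV. \<Sum>l\<in>UNIV. csc (Y$j$l) (unit_op j l)) $ a $ b = Y $ a $ b" for a b
  proof -
    have "(\<Sum>j\<in>UNIV. \<Sum>l\<in>UNIV. csc (Y$j$l) (unit_op j l)) $ a $ b
        = (\<Sum>j\<in>UNIV. \<Sum>l\<in>UNIV. Y$j$l * (if a = j \<and> b = l then 1 else 0))"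
      by (simp add: unit_op_def)
    also have "\<dots> = (\<Sum>j\<in>UNIV. if a = j then Y$j$b else 0)"
      by (rule sum.cong[OF refl]) (auto simp: if_distrib if_distribR cong: if_cong)
    also have "\<dots> = Y $ a $ b" by simp
    finally show ?thesis .
  qed
  then show ?thesis by (simp add: vec_eq_iff)
qed



lemma proj_expand:
  assumes sA: "star_alg A"
  shows "proj A Y $ i $ k = (\<Sum>j\<in>UNIV. \<Sum>l\<in>UNIV. Y$j$l * proj A (unit_op j l) $ i $ k)"
proof -
  have "proj A Y = proj A (\<Sum>j\<in>UNIV. \<Sum>l\<in>UNIV. csc (Y$j$l) (unit_op j l))"
    by (subst op_expand[of Y]) (rule refl)
  also have "\<dots> = (\<Sum>j\<in>UNIV. \<Sum>l\<in>UNIV. csc (Y$j$l) (proj A (unit_op j l)))"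
    by (simp add: proj_sum[OF sA] proj_csc[OF sA])
  finally show ?thesis by simp
qed

lemma unit_mult_entry: "((a::'n::finite op) ** unit_op j l) $ j' $ l' = (if l' = l then a $ j' $ j else 0)"
  by (simp add: mmult_entry unit_op_def if_distrib if_distribR cong: if_cong)

lemma double_commutant:
  fixes x :: "'n::finite op"
  assumes sA: "star_alg A" and x: "x \<in> commutant (commutant A)"
  shows "x \<in> A"
proof -
  let ?P = "proj A"
  define M where "M l k = (\<chi> i j. ?P (unit_op j l) $ i $ k)" for l k
  have MA: "M l k \<in> commutant A" for l k
    unfolding commutant_def
  proof (intro CollectI ballI)
    fix a assume a: "a \<in> A"
    have "(a ** M l k) $ i $ j = (M l k ** a) $ i $ j" for i j
    proof -
      have "(a ** M l k) $ i $ j = (a ** ?P (unit_op j l)) $ i $ k"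
        by (simp add: mmult_entry M_def)
      also have "\<dots> = ?P (a ** unit_op j l) $ i $ k"
        by (simp add: proj_mult[OF sA a])
      also have "\<dots> = (\<Sum>j'\<in>UNIV. \<Sum>l'\<in>UNIV. (if l' = l then a $ j' $ j else 0) * ?P (unit_op j' l') $ i $ k)"
        by (subst proj_expand[OF sA]) (simp only: unit_mult_entry)
      also have "\<dots> = (\<Sum>j'\<in>UNIV. a $ j' $ j * ?P (unit_op j' l) $ i $ k)"
        by (simp add: if_distrib if_distribR cong: if_cong)
      also have "\<dots> = (M l k ** a) $ i $ j"
        by (simp add: mmult_entry M_def mult.commute)
      finally show ?thesis .
    qed
    then show "a ** M l k = M l k ** a" by (simp add: vec_eq_iff)
  qed
  have xM: "M l k ** x = x ** M l k" for l k
    using x MA unfolding commutant_def by blast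
  have P1: "?P (mat 1) $ m $ k = (\<Sum>l\<in>UNIV. ?P (unit_op l l) $ m $ k)" for m k
    by (subst proj_expand[OF sA]) (simp add: mat_entry if_distrib if_distribR cong: if_cong)
  have "?P x $ i $ k = x $ i $ k" for i k
  proof -
    have "?P x $ i $ k = (\<Sum>j\<in>UNIV. \<Sum>l\<in>UNIV. M l k $ i $ j * x $ j $ l)"
      by (subst proj_expand[OF sA]) (simp add: M_def mult.commute)
    also have "\<dots> = (\<Sum>l\<in>UNIV. \<Sum>j\<in>UNIV. M l k $ i $ j * x $ j $ l)"
      by (rule sum.swap)
    also have "\<dots> = (\<Sum>l\<in>UNIV. (M l k ** x) $ i $ l)"
      by (simp add: mmult_entry)
    also have "\<dots> = (\<Sum>l\<in>UNIV. (x ** M l k) $ i $ l)"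
      by (simp add: xM)
    also have "\<dots> = (\<Sum>l\<in>UNIV. \<Sum>m\<in>UNIV. x $ i $ m * ?P (unit_op l l) $ m $ k)"
      by (simp add: mmult_entry M_def)
    also have "\<dots> = (\<Sum>m\<in>UNIV. \<Sum>l\<in>UNIV. x $ i $ m * ?P (unit_op l l) $ m $ k)"
      by (rule sum.swap)
    also have "\<dots> = (\<Sum>m\<in>UNIV. x $ i $ m * ?P (mat 1) $ m $ k)"
      by (simp add: P1 sum_distrib_left)
    also have "\<dots> = (x ** mat 1) $ i $ k"
      using sA unfolding star_alg_def by (simp only: mmult_entry proj_id[OF sA])
    finally show ?thesis by simp
  qed
  then have "?P x = x" by (simp add: vec_eq_iff)
  then show ?thesis using proj_prop[OF sA, of x] by simp
qed



lemma unitary_cm_iff: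
  assumes u: "unitary_op S"
  shows "S ** X ** adj S = X \<longleftrightarrow> cm S X"
proof
  assume h: "S ** X ** adj S = X"
  have "S ** X = S ** X ** (adj S ** S)" using u by (simp add: unitary_op_def)
  also have "\<dots> = X ** S" using h by (simp add: matrix_mul_assoc)
  finally show "cm S X" by (simp add: cm_def)
next
  assume "cm S X"
  then have "S ** X ** adj S = X ** (S ** adj S)" by (simp add: cm_def matrix_mul_assoc)
  then show "S ** X ** adj S = X" using u by (simp add: unitary_op_def)
qed

lemma unitary_cm_adj:
  assumes u: "unitary_op S" and c: "cm S X"
  shows "cm (adj S) X"
proof -
  have "adj S ** X = adj S ** (X ** S) ** adj S"
    using u by (simp add: unitary_op_def matrix_mul_assoc[symmetric])
  also have "\<dots> = adj S ** (S ** X) ** adj S" using c by (simp add: cm_def)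
  also have "\<dots> = X ** adj S" using u by (simp add: unitary_op_def matrix_mul_assoc)
  finally show ?thesis by (simp add: cm_def)
qed

lemma unitary_adj: "unitary_op S \<Longrightarrow> unitary_op (adj S)"
  by (simp add: unitary_op_def)

lemma unit_left_entry: "(unit_op j l ** (S::'n::finite op)) $ i $ l' = (if i = j then S $ l $ l' else 0)"
  by (simp add: mmult_entry unit_op_def if_distrib if_distribR cong: if_cong)

lemma central_trivial:
  fixes S :: "'n::finite op"
  assumes "\<And>j l. cm S (unit_op j l)"
  shows "trivial_op S"
proof -
  fix a :: 'n
  have e: "S $ i $ j = (if i = j then S $ l $ l else 0)" for i j l
  proof -
    have "(S ** unit_op j l) $ i $ l = (unit_op j l ** S) $ i $ l"
      using assms[of j l] by (simp add: cm_def)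
    then show ?thesis by (simp add: unit_mult_entry unit_left_entry)
  qed
  have "S = mat (S $ a $ a)"
    by (simp add: vec_eq_iff mat_entry) (metis e)
  then show ?thesis unfolding trivial_op_def by blast
qed

theorem theorem7:
  fixes H :: "complex^'n::finite^'n" and Ls :: "(complex^'n^'n) list"
    and Os :: "(complex^'n^'n) set"
  assumes "adj H = H"
    and "finite Os"
    and "\<forall>B\<in>Os. adj B = B"
  shows "let Ldag = hs_adjoint (lindblad H Ls);
             Nperp = cspan {(Ldag ^^ k) B | k B. B \<in> Os};
             G = {S. ods Ldag Os S}
         in (alg Nperp \<subset> UNIV \<longleftrightarrow> (\<exists>S. ods Ldag Os S \<and> \<not> trivial_op S))
            \<and> alg Nperp = commutant G"
proof -
  define Ldag where "Ldag = hs_adjoint (lindblad H Ls)"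
  define T where "T = {(Ldag ^^ k) B | k B. B \<in> Os}"
  define A where "A = alg (cspan T)"
  define G where "G = {S. ods Ldag Os S}"
  have odsG: "S \<in> G \<longleftrightarrow> unitary_op S \<and> (\<forall>X\<in>T. cm S X)" for S
    unfolding G_def ods_def T_def using unitary_cm_iff by blast
  have sA: "star_alg A" unfolding A_def by (rule star_alg_alg)
  have TA: "T \<subseteq> A" unfolding A_def using cspan_sup alg_sup by blast
  have Gadj: "adj S \<in> G" if "S \<in> G" for S
    using that unfolding odsG by (simp add: unitary_adj unitary_cm_adj)
  have sG: "star_alg (commutant G)"
    unfolding star_alg_def
  proof (intro conjI ballI allI)
    show "mat 1 \<in> commutant G" unfolding commutant_cm by (simp add: cm_sym[OF cm_mat])
  next
    fix X Y assume X: "X \<in> commutant G" and Y: "Y \<in> commutant G"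
    show "X + Y \<in> commutant G" using X Y unfolding commutant_cm by (metis cm_add cm_sym)
    show "X ** Y \<in> commutant G" using X Y unfolding commutant_cm by (metis cm_mult cm_sym)
  next
    fix X c assume X: "X \<in> commutant G"
    show "csc c X \<in> commutant G" using X unfolding commutant_cm by (metis cm_csc cm_sym)
  next
    fix X assume X: "X \<in> commutant G"
    show "adj X \<in> commutant G" unfolding commutant_cm
    proof
      fix S assume "S \<in> G"
      then have "cm X (adj S)" using X Gadj unfolding commutant_cm by blast
      then show "cm (adj X) S" using cm_adj by fastforce
    qed
  qed
  have TG: "T \<subseteq> commutant G"
  proof
    fix X assume X: "X \<in> T"
    show "X \<in> commutant G" unfolding commutant_cm
    proof
      fix S assume "S \<in> G"
      then have "cm S X" using odsG X by blast
      then show "cm X S" by (rule cm_sym)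
    qed
  qed
  have sub1: "A \<subseteq> commutant G"
    unfolding A_def by (rule alg_least[OF sG cspan_sub[OF sG TG]])
  have sub2: "commutant G \<subseteq> A"
  proof
    fix x assume x: "x \<in> commutant G"
    have "x \<in> commutant (commutant A)"
    proof (rule dcomm_of_unitaries)
      show "\<forall>a\<in>A. adj a \<in> A" using sA by (simp add: star_alg_def)
      fix u assume u: "unitary_op u" "u \<in> commutant A"
      then have "u \<in> G" unfolding odsG using TA commutant_cm by blast
      then show "cm x u" using x unfolding commutant_cm by (simp add: cm_sym)
    qed
    then show "x \<in> A" by (rule double_commutant[OF sA])
  qed
  have main: "A = commutant G" using sub1 sub2 by blast
  have part1: "A \<subset> UNIV \<longleftrightarrow> (\<exists>S. ods Ldag Os S \<and> \<not> trivial_op S)"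
  proof
    assume "A \<subset> UNIV"
    then obtain Y where "Y \<notin> commutant G" using main by blast
    then obtain S where S0: "S \<in> G" "\<not> cm Y S" unfolding commutant_cm by blast
    have S: "S \<in> G" "\<not> cm S Y" using S0 cm_sym by blast+
    have "\<not> trivial_op S" using S(2) unfolding trivial_op_def by (metis cm_mat cm_sym)
    then show "\<exists>S. ods Ldag Os S \<and> \<not> trivial_op S" using S(1) unfolding G_def by blast
  next
    assume "\<exists>S. ods Ldag Os S \<and> \<not> trivial_op S"
    then obtain S where S: "S \<in> G" "\<not> trivial_op S" unfolding G_def by blast
    show "A \<subset> UNIV"
    proof (rule ccontr)
      assume "\<not> A \<subset> UNIV"
      then have "A = UNIV" by blast
      have "cm S (unit_op j l)" for j l
      proof -
        have "unit_op j l \<in> commutant G" using main \<open>A = UNIV\<close> by blast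
        then have "cm (unit_op j l) S" using S(1) unfolding commutant_cm by blast
        then show ?thesis by (rule cm_sym)
      qed
      then have "trivial_op S" by (rule central_trivial)
      then show False using S(2) by blast
    qed
  qed
  show ?thesis
    unfolding Let_def using part1 main
    by (simp add: A_def T_def G_def Ldag_def)
qed

end
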